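(* For the four-node network described in the context, with arbitrary crossover probabilities, define $\mathbb{C}_{1,4}=1-H(p_{1,4})$, $\mathbb{C}'=1-H(p')$, $\mathbb{C}''=1-H(p'')$ with $$p' = [(1-p_{1,3})(1-p_{2,3})+p_{1,3}p_{2,3}]\,p_{3,4} + [p_{1,3}(1-p_{2,3})+(1-p_{1,3})p_{2,3}](1-p_{3,4}),$$ $$p'' = p_{1,3}(1-p_{2,3})(1-p_{3,4})(1-p_{1,4}) + (1-p_{1,3})p_{2,3}(1-p_{3,4})(1-p_{1,4}) + (1-p_{1,3})(1-p_{2,3})p_{3,4}(1-p_{1,4}) + (1-p_{1,3})(1-p_{2,3})(1-p_{3,4})p_{1,4} + (1-p_{1,3})p_{2,3}p_{3,4}p_{1,4} + p_{1,3}(1-p_{2,3})p_{3,4}p_{1,4} + p_{1,3}p_{2,3}(1-p_{3,4})p_{1,4} + p_{1,3}p_{2,3}p_{3,4}(1-p_{1,4}).$$ Let $\Lambda_{\text{nc}}$ be the convex hull of the rate pairs $(R_A,R_B)$ with $R_A\le\mathbb{C}_{1,4}$, $R_B\le\mathbb{C}''$ (the achievable region of independent network-then-channel decoding); $\Lambda_{\text{serial}}$ the convex hull of those with $R_A\le\mathbb{C}_{1,4}$, $R_B\le\mathbb{C}'$ (the achievable region of serial decoding); and $\Lambda_{\text{joint}}$ the convex hull of those with $R_A\le\mathbb{C}_{1,4}+\mathbb{C}'-\mathbb{C}''$, $R_B\le\mathbb{C}'$, $R_A+R_B\le\mathbb{C}_{1,4}+\mathbb{C}'$ (the achievable region of joint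 decoding). Then $$\Lambda_{\text{nc}} \subseteq \Lambda_{\text{serial}} \subseteq \Lambda_{\text{joint}}.$$
   Context: Network: nodes $1,2,3,4$ with directed links $1\to3$, $1\to4$, $2\to3$, $3\to4$. Each link $i\to j$ is a binary symmetric channel with crossover probability $p_{i,j}\in[0,1]$; the link channels are independent and memoryless. Node 1 sends the same codeword (encoding message $A$) on links $1\to3$ and $1\to4$, node 2 sends a codeword (encoding message $B$) on link $2\to3$, and node 3 forwards the bitwise XOR of its two received vectors on link $3\to4$; node 4 decodes from its two received vectors. $H(p)=-p\log p-(1-p)\log(1-p)$ is the binary entropy function (base 2). Rate regions are subsets of pairs $(R_A,R_B)$ of nonnegative rates. *)

theory Defs
  imports "HOL-Analysis.Analysis"
begin

text \<open>Binary entropy (base 2). With Isabelle's conventions log 2 0 = 0, so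
  the term 0 * log 2 0 is 0, matching the usual convention 0 log 0 = 0.\<close>
definition bin_entropy :: "real \<Rightarrow> real" where
  "bin_entropy p = - p * log 2 p - (1 - p) * log 2 (1 - p)"

definition p_prime :: "real \<Rightarrow> real \<Rightarrow> real \<Rightarrow> real" where
  "p_prime p13 p23 p34 =
     ((1 - p13) * (1 - p23) + p13 * p23) * p34
   + (p13 * (1 - p23) + (1 - p13) * p23) * (1 - p34)"

definition p_dprime :: "real \<Rightarrow> real \<Rightarrow> real \<Rightarrow> real \<Rightarrow> real" where
  "p_dprime p13 p23 p34 p14 =
     p13 * (1 - p23) * (1 - p34) * (1 - p14)
   + (1 - p13) * p23 * (1 - p34) * (1 - p14)
   + (1 - p13) * (1 - p23) * p34 * (1 - p14)
   + (1 - p13) * (1 - p23) * (1 - p34) * p14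
   + (1 - p13) * p23 * p34 * p14
   + p13 * (1 - p23) * p34 * p14
   + p13 * p23 * (1 - p34) * p14
   + p13 * p23 * p34 * (1 - p14)"

definition cap14 :: "real \<Rightarrow> real" where
  "cap14 p14 = 1 - bin_entropy p14"

definition cap' :: "real \<Rightarrow> real \<Rightarrow> real \<Rightarrow> real" where
  "cap' p13 p23 p34 = 1 - bin_entropy (p_prime p13 p23 p34)"

definition cap'' :: "real \<Rightarrow> real \<Rightarrow> real \<Rightarrow> real \<Rightarrow> real" where
  "cap'' p13 p23 p34 p14 = 1 - bin_entropy (p_dprime p13 p23 p34 p14)"

definition region_nc :: "real \<Rightarrow> real \<Rightarrow> real \<Rightarrow> real \<Rightarrow> (real \<times> real) set" where
  "region_nc p13 p23 p34 p14 = convex hull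
     {(ra, rb). 0 \<le> ra \<and> 0 \<le> rb \<and> ra \<le> cap14 p14 \<and> rb \<le> cap'' p13 p23 p34 p14}"

definition region_serial :: "real \<Rightarrow> real \<Rightarrow> real \<Rightarrow> real \<Rightarrow> (real \<times> real) set" where
  "region_serial p13 p23 p34 p14 = convex hull
     {(ra, rb). 0 \<le> ra \<and> 0 \<le> rb \<and> ra \<le> cap14 p14 \<and> rb \<le> cap' p13 p23 p34}"

definition region_joint :: "real \<Rightarrow> real \<Rightarrow> real \<Rightarrow> real \<Rightarrow> (real \<times> real) set" where
  "region_joint p13 p23 p34 p14 = convex hull
     {(ra, rb). 0 \<le> ra \<and> 0 \<le> rb
        \<and> ra \<le> cap14 p14 + cap' p13 p23 p34 - cap'' p13 p23 p34 p14
        \<and> rb \<le> cap' p13 p23 p34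
        \<and> ra + rb \<le> cap14 p14 + cap' p13 p23 p34}"

end

theory Submission
  imports Defs
begin

lemma key_ln: fixes x y :: real assumes "0 \<le> y" "0 < x"
  shows "y * ln x + y - x \<le> y * ln y"
proof (cases "y = 0")
  case True then show ?thesis using assms by simp
next
  case False
  then have yp: "y > 0" using assms by simp
  have "ln (x / y) \<le> x / y - 1" using ln_le_minus_one[of "x/y"] yp assms by simp
  then have "ln x - ln y \<le> x / y - 1" using ln_div[of x y] yp assms by simp
  then have "y * (ln x - ln y) \<le> y * (x / y - 1)" using yp by (simp add: mult_left_mono)
  then show ?thesis using yp by (simp add: algebra_simps)
qed

definition gg :: "real \<Rightarrow> real" where "gg x = x * ln x + (1 - x) * ln (1 - x)"

lemma tangent: fixes y s :: real assumes "0 \<le> y" "y \<le> 1" "0 < s" "s < 1"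
  shows "y * ln s + (1 - y) * ln (1 - s) \<le> gg y"
  using key_ln[of y s] key_ln[of "1-y" "1-s"] assms unfolding gg_def by simp

lemma gg_mix: fixes q t :: real assumes "0 \<le> q" "q \<le> 1" "0 \<le> t" "t \<le> 1"
  shows "gg ((1 - t) * q + t * (1 - q)) \<le> gg q"
proof -
  define s where "s = (1 - t) * q + t * (1 - q)"
  have s0: "0 \<le> s" unfolding s_def using assms by simp
  have s1: "s \<le> 1"
  proof -
    have "1 - s = (1 - t) * (1 - q) + t * q" unfolding s_def by (simp add: algebra_simps)
    moreover have "0 \<le> (1 - t) * (1 - q) + t * q" using assms by simp
    ultimately show ?thesis by simp
  qed
  have sym: "gg (1 - q) = gg q" unfolding gg_def by simp
  show ?thesis
  proof (cases "s = 0 \<or> s = 1")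
    case True
    have a: "(1 - t) * q \<ge> 0" "t * (1 - q) \<ge> 0" "(1-t)*(1-q) \<ge> 0" "t * q \<ge> 0"
      using assms by auto
    have "1 - s = (1 - t) * (1 - q) + t * q" unfolding s_def by (simp add: algebra_simps)
    then have "q = 0 \<or> q = 1" using True a s_def
      by (smt (verit) mult_eq_0_iff)
    then show ?thesis using True unfolding s_def[symmetric] gg_def by auto
  next
    case False
    then have sp: "0 < s" "s < 1" using s0 s1 by auto
    have h1: "q * ln s + (1 - q) * ln (1 - s) \<le> gg q" using tangent[OF assms(1,2) sp] .
    have h2: "(1 - q) * ln s + q * ln (1 - s) \<le> gg q"
      using tangent[of "1-q" s] assms sp sym by simp
    have "(1 - t) * (q * ln s + (1 - q) * ln (1 - s)) + t * ((1 - q) * ln s + q * ln (1 - s))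
          \<le> (1 - t) * gg q + t * gg q"
      using mult_left_mono[OF h1, of "1-t"] mult_left_mono[OF h2, of t] assms by linarith
    moreover have "(1 - t) * (q * ln s + (1 - q) * ln (1 - s)) + t * ((1 - q) * ln s + q * ln (1 - s))
        = gg s" unfolding gg_def s_def by (simp add: algebra_simps)
    ultimately show ?thesis unfolding s_def by (simp add: algebra_simps)
  qed
qed

lemma H_gg: "bin_entropy p = - gg p / ln 2"
  unfolding bin_entropy_def gg_def log_def by (simp add: field_simps)

lemma cap_le:
  fixes p13 p14 p23 p34 :: real
  assumes "0 \<le> p13" "p13 \<le> 1" "0 \<le> p14" "p14 \<le> 1"
      and "0 \<le> p23" "p23 \<le> 1" "0 \<le> p34" "p34 \<le> 1"
  shows "cap'' p13 p23 p34 p14 \<le> cap' p13 p23 p34"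
proof -
  define a where "a = p13 * (1 - p23) + (1 - p13) * p23"
  have a0: "0 \<le> a" unfolding a_def using assms by simp
  have "1 - a = p13 * p23 + (1 - p13) * (1 - p23)" unfolding a_def by (simp add: algebra_simps)
  moreover have "0 \<le> p13 * p23 + (1 - p13) * (1 - p23)" using assms by simp
  ultimately have a1: "a \<le> 1" by simp
  define q where "q = (1 - p34) * a + p34 * (1 - a)"
  have qe: "p_prime p13 p23 p34 = q" unfolding q_def a_def p_prime_def by (simp add: algebra_simps)
  have q0: "0 \<le> q" unfolding q_def using a0 a1 assms by simp
  have "1 - q = (1 - p34) * (1 - a) + p34 * a" unfolding q_def by (simp add: algebra_simps)
  moreover have "0 \<le> (1 - p34) * (1 - a) + p34 * a" using a0 a1 assms by simp
  ultimately have q1: "q \<le> 1" by simp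
  have de: "p_dprime p13 p23 p34 p14 = (1 - p14) * q + p14 * (1 - q)"
    unfolding q_def a_def p_dprime_def by (simp add: algebra_simps)
  have "gg ((1 - p14) * q + p14 * (1 - q)) \<le> gg q" using gg_mix q0 q1 assms by simp
  then have "- gg q / ln 2 \<le> - gg ((1 - p14) * q + p14 * (1 - q)) / ln 2"
    by (simp add: divide_right_mono)
  then show ?thesis unfolding cap'_def cap''_def qe de H_gg by simp
qed

theorem theorem4:
  fixes p13 p14 p23 p34 :: real
  assumes "0 \<le> p13" "p13 \<le> 1" "0 \<le> p14" "p14 \<le> 1"
      and "0 \<le> p23" "p23 \<le> 1" "0 \<le> p34" "p34 \<le> 1"
  shows "region_nc p13 p23 p34 p14 \<subseteq> region_serial p13 p23 p34 p14
       \<and> region_serial p13 p23 p34 p14 \<subseteq> region_joint p13 p23 p34 p14"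
proof -
  have c: "cap'' p13 p23 p34 p14 \<le> cap' p13 p23 p34" using cap_le assms by blast
  show ?thesis unfolding region_nc_def region_serial_def region_joint_def
    by (intro conjI hull_mono) (use c in auto)
qed

end
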